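(* Given the values of two fields, say $u$ and $v$, in three points $\mathfrak{z}_0$, $\mathfrak{z}_1=\mathfrak{z}_0+1$ and $\mathfrak{z}_2=\mathfrak{z}_0+\omega$, the equations of the $fgh$--system determine uniquely the values of $u$ and $v$ in the point $\mathfrak{z}_3=\mathfrak{z}_0+1+\omega$: \begin{equation} u_3-u_0=(u_1-u_0)\frac{v_1-v_0}{v_1-v_2}+(u_2-u_0)\frac{v_2-v_0}{v_2-v_1}, \end{equation} \begin{equation} v_3-v_1=(v_1-v_0)\frac{u_1-u_0}{u_0-u_3}\quad \Leftrightarrow\quad v_3-v_2=(v_2-v_0)\frac{u_2-u_0}{u_0-u_3}. \end{equation}
   Context: On the regular triangular lattice with vertices $k+\ell\omega+m\omega^2$ ($\omega=e^{2\pi i/3}$), the $fgh$--system for functions $u,v$ on the vertices (with $f=u(\mathfrak{z}_2)-u(\mathfrak{z}_1)$, $g=v(\mathfrak{z}_2)-v(\mathfrak{z}_1)$ on each positively oriented edge $(\mathfrak{z}_1,\mathfrak{z}_2)$, i.e. $\mathfrak{z}_2-\mathfrak{z}_1\in\{1,\omega,\omega^2\}$) amounts to the equation \[ \frac{u(\mathfrak{z}_2)-u(\mathfrak{z}_1)}{u(\mathfrak{z}_3)-u(\mathfrak{z}_2)}=\frac{v(\mathfrak{z}_3)-v(\mathfrak{z}_2)}{v(\mathfrak{z}_1)-v(\mathfrak{z}_3)} \] for every elementary triangle whose consecutive vertices $\mathfrak{z}_1,\mathfrak{z}_2,\mathfrak{z}_3$ satisfy $\mathfrak{z}_2-\mathfrak{z}_1,\mathfrak{z}_3-\mathfrak{z}_2,\mathfrak{z}_1-\mathfrak{z}_3\in\{1,\omega,\omega^2\}$.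 Notation $u_j=u(\mathfrak{z}_j)$, $v_j=v(\mathfrak{z}_j)$. *)

theory Defs
  imports Complex_Main
begin

definition omega :: complex where
  "omega = cis (2 * pi / 3)"

definition tri_lattice :: "complex set" where
  "tri_lattice = {of_int k + of_int l * omega + of_int m * omega ^ 2 | k l m. True}"

text \<open>The fgh-equation on an elementary triangle with consecutive vertices za, zb, zc
  (in the roles of z_1, z_2, z_3 of the defining equation).\<close>
definition fgh_eq :: "(complex \<Rightarrow> complex) \<Rightarrow> (complex \<Rightarrow> complex) \<Rightarrow> complex \<Rightarrow> complex \<Rightarrow> complex \<Rightarrow> bool" where
  "fgh_eq u v za zb zc \<longleftrightarrow>
     (u zb - u za) / (u zc - u zb) = (v zc - v zb) / (v za - v zc)"

end

theory Submission
  imports Defs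
begin

lemma negl: "(a::'a::ab_group_add) - b + (c - d) = 0 \<Longrightarrow> (a = b) = (c = d)"
proof -
  assume h: "a - b + (c - d) = 0"
  hence e: "a - b = - (c - d)" by (rule add_eq_0_iff2[THEN iffD1])
  show ?thesis
  proof
    assume "a = b" then have "- (c - d) = 0" using e by simp then show "c = d" by simp
  next
    assume "c = d" then have "a - b = 0" using e by simp then show "a = b" by simp
  qed
qed
lemma posl: "(a::'a::ab_group_add) - b - (c - d) = 0 \<Longrightarrow> (a = b) = (c = d)"
proof -
  assume h: "a - b - (c - d) = 0"
  hence e: "a - b = c - d" by simp
  show ?thesis
  proof
    assume "a = b" then have "c - d = 0" using e by simp then show "c = d" by simp
  next
    assume "c = d" then have "a - b = 0" using e by simp then show "a = b" by simp
  qed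
qed

lemma alg:
  fixes u0 u1 u2 u3 v0 v1 v2 v3 :: complex
  assumes d: "u0 \<noteq> u1" "u0 \<noteq> u2" "u0 \<noteq> u3" "v0 \<noteq> v3" "v1 \<noteq> v3" "v2 \<noteq> v3" "v1 \<noteq> v2"
  shows
   "((u0 - u3) / (u1 - u0) = (v1 - v0) / (v3 - v1)) = (v3 - v1 = (v1 - v0) * ((u1 - u0) / (u0 - u3)))"
   "((u0 - u3) / (u2 - u0) = (v2 - v0) / (v3 - v2)) = (v3 - v2 = (v2 - v0) * ((u2 - u0) / (u0 - u3)))"
   "v3 - v1 = (v1 - v0) * ((u1 - u0) / (u0 - u3)) \<Longrightarrow>
     (v3 - v2 = (v2 - v0) * ((u2 - u0) / (u0 - u3))) = (u3 - u0 = (u1 - u0) * ((v1 - v0) / (v1 - v2))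
                                + (u2 - u0) * ((v2 - v0) / (v2 - v1)))"
   "v3 - v2 = (v2 - v0) * ((u2 - u0) / (u0 - u3)) \<Longrightarrow>
     (v3 - v1 = (v1 - v0) * ((u1 - u0) / (u0 - u3))) = (u3 - u0 = (u1 - u0) * ((v1 - v0) / (v1 - v2))
                                + (u2 - u0) * ((v2 - v0) / (v2 - v1)))"
proof -
  have n: "u1 - u0 \<noteq> 0" "u2 - u0 \<noteq> 0" "u0 - u3 \<noteq> 0" "v3 - v1 \<noteq> 0" "v3 - v2 \<noteq> 0"
      "v1 - v2 \<noteq> 0" "v2 - v1 \<noteq> 0" using d by auto
  show "((u0 - u3) / (u1 - u0) = (v1 - v0) / (v3 - v1)) = (v3 - v1 = (v1 - v0) * ((u1 - u0) / (u0 - u3)))"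
    using n by (simp add: field_simps)
  show "((u0 - u3) / (u2 - u0) = (v2 - v0) / (v3 - v2)) = (v3 - v2 = (v2 - v0) * ((u2 - u0) / (u0 - u3)))"
    using n by (simp add: field_simps)
  have S: "(u1 - u0) * ((v1 - v0) / (v1 - v2)) + (u2 - u0) * ((v2 - v0) / (v2 - v1))
      = ((u1 - u0) * (v1 - v0) - (u2 - u0) * (v2 - v0)) / (v1 - v2)" (is "?L = ?R")
  proof -
    have g: "\<And>a b c e D::complex. a * (b / D) + c * (e / (- D)) = (a * b - c * e) / D"
      by (simp add: diff_divide_distrib)
    show ?thesis using g[where a="u1 - u0" and b="v1 - v0" and c="u2 - u0" and e="v2 - v0" and D="v1 - v2", unfolded minus_diff_eq] .
  qed
  have U: "(u3 - u0 = (u1 - u0) * ((v1 - v0) / (v1 - v2)) + (u2 - u0) * ((v2 - v0) / (v2 - v1)))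
     = ((u3 - u0) * (v1 - v2) = (u1 - u0) * (v1 - v0) - (u2 - u0) * (v2 - v0))"
    unfolding S using n by (simp add: eq_divide_eq)
  have V1: "(v3 - v1 = (v1 - v0) * ((u1 - u0) / (u0 - u3))) = ((v3 - v1) * (u0 - u3) = (v1 - v0) * (u1 - u0))"
    using n by (simp add: eq_divide_eq)
  have V2: "(v3 - v2 = (v2 - v0) * ((u2 - u0) / (u0 - u3))) = ((v3 - v2) * (u0 - u3) = (v2 - v0) * (u2 - u0))"
    using n by (simp add: eq_divide_eq)
  show "v3 - v1 = (v1 - v0) * ((u1 - u0) / (u0 - u3)) \<Longrightarrow>
     (v3 - v2 = (v2 - v0) * ((u2 - u0) / (u0 - u3))) = (u3 - u0 = (u1 - u0) * ((v1 - v0) / (v1 - v2))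
                                + (u2 - u0) * ((v2 - v0) / (v2 - v1)))"
    unfolding U V1 V2
  proof -
    assume h: "(v3 - v1) * (u0 - u3) = (v1 - v0) * (u1 - u0)"
    have "((v3 - v2) * (u0 - u3) - (v2 - v0) * (u2 - u0)) + ((u3 - u0) * (v1 - v2) - ((u1 - u0) * (v1 - v0) - (u2 - u0) * (v2 - v0)))
        = (v3 - v1) * (u0 - u3) - (v1 - v0) * (u1 - u0)" by (simp add: algebra_simps)
    also have "\<dots> = 0" using h by simp
    finally show "((v3 - v2) * (u0 - u3) = (v2 - v0) * (u2 - u0)) = ((u3 - u0) * (v1 - v2) = (u1 - u0) * (v1 - v0) - (u2 - u0) * (v2 - v0))" by (rule negl)
  qed
  show "v3 - v2 = (v2 - v0) * ((u2 - u0) / (u0 - u3)) \<Longrightarrow>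
     (v3 - v1 = (v1 - v0) * ((u1 - u0) / (u0 - u3))) = (u3 - u0 = (u1 - u0) * ((v1 - v0) / (v1 - v2))
                                + (u2 - u0) * ((v2 - v0) / (v2 - v1)))"
    unfolding U V1 V2
  proof -
    assume h: "(v3 - v2) * (u0 - u3) = (v2 - v0) * (u2 - u0)"
    have "((v3 - v1) * (u0 - u3) - (v1 - v0) * (u1 - u0)) - ((u3 - u0) * (v1 - v2) - ((u1 - u0) * (v1 - v0) - (u2 - u0) * (v2 - v0)))
        = (v3 - v2) * (u0 - u3) - (v2 - v0) * (u2 - u0)" by (simp add: algebra_simps)
    also have "\<dots> = 0" using h by simp
    finally show "((v3 - v1) * (u0 - u3) = (v1 - v0) * (u1 - u0)) = ((u3 - u0) * (v1 - v2) = (u1 - u0) * (v1 - v0) - (u2 - u0) * (v2 - v0))" by (rule posl)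
  qed
qed

theorem lemma8:
  fixes u v :: "complex \<Rightarrow> complex" and z0 :: complex
  assumes "z0 \<in> tri_lattice"
    and "distinct [u z0, u (z0 + 1), u (z0 + omega), u (z0 + 1 + omega)]"
    and "distinct [v z0, v (z0 + 1), v (z0 + omega), v (z0 + 1 + omega)]"
  shows "let z1 = z0 + 1; z2 = z0 + omega; z3 = z0 + 1 + omega;
             u0 = u z0; u1 = u z1; u2 = u z2; u3 = u z3;
             v0 = v z0; v1 = v z1; v2 = v z2; v3 = v z3;
             eqs = (fgh_eq u v z3 z0 z1 \<and> fgh_eq u v z3 z0 z2);
             uform = (u3 - u0 = (u1 - u0) * ((v1 - v0) / (v1 - v2))
                                + (u2 - u0) * ((v2 - v0) / (v2 - v1)));
             vform1 = (v3 - v1 = (v1 - v0) * ((u1 - u0) / (u0 - u3)));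
             vform2 = (v3 - v2 = (v2 - v0) * ((u2 - u0) / (u0 - u3)))
         in (eqs \<longleftrightarrow> uform \<and> vform1) \<and> (eqs \<longleftrightarrow> uform \<and> vform2)"
proof -
  note a = alg[of "u z0" "u (z0 + 1)" "u (z0 + omega)" "u (z0 + 1 + omega)"
      "v z0" "v (z0 + 1 + omega)" "v (z0 + 1)" "v (z0 + omega)"]
  have d: "u z0 \<noteq> u (z0 + 1)" "u z0 \<noteq> u (z0 + omega)" "u z0 \<noteq> u (z0 + 1 + omega)"
    "v z0 \<noteq> v (z0 + 1 + omega)" "v (z0 + 1) \<noteq> v (z0 + 1 + omega)"
    "v (z0 + omega) \<noteq> v (z0 + 1 + omega)" "v (z0 + 1) \<noteq> v (z0 + omega)"
    using assms(2,3) by auto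
  note b = a[OF d]
  show ?thesis unfolding Let_def fgh_eq_def b(1,2) using b(3,4) by blast
qed

end
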